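(* Let $\sqrt5$ denote the square root of $5$ in $\mathbb{Z}_{11}$ with $\sqrt5\equiv7\pmod{11}$. Let $\alpha\ge1$ and $j\in\{1,\dots,10\}$, and let $z\in\mathbb{Z}_{11}$ satisfy $z\equiv\frac{2}{\sqrt5}+j\cdot11^{2\alpha-1}\pmod{11^{2\alpha}}$. Then $f_z(y)=y^2-\sqrt5\,zy+1$ has no root in $\mathbb{Z}_{11}$. *)

theory Defs
  imports Main "HOL-Number_Theory.Cong"
begin

text \<open>The p-adic integers Z_p, modelled as the inverse limit of Z/p^n Z:
  coherent sequences of residues x n in [0, p^n) with x (n+1) mod p^n = x n.\<close>

definition padic_ints :: "int \<Rightarrow> (nat \<Rightarrow> int) set" where
  "padic_ints p = {x. \<forall>n. 0 \<le> x n \<and> x n < p ^ n \<and> x (Suc n) mod p ^ n = x n}"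

definition padd :: "int \<Rightarrow> (nat \<Rightarrow> int) \<Rightarrow> (nat \<Rightarrow> int) \<Rightarrow> (nat \<Rightarrow> int)" where
  "padd p x y = (\<lambda>n. (x n + y n) mod p ^ n)"

definition psub :: "int \<Rightarrow> (nat \<Rightarrow> int) \<Rightarrow> (nat \<Rightarrow> int) \<Rightarrow> (nat \<Rightarrow> int)" where
  "psub p x y = (\<lambda>n. (x n - y n) mod p ^ n)"

definition pmul :: "int \<Rightarrow> (nat \<Rightarrow> int) \<Rightarrow> (nat \<Rightarrow> int) \<Rightarrow> (nat \<Rightarrow> int)" where
  "pmul p x y = (\<lambda>n. (x n * y n) mod p ^ n)"

definition pconst :: "int \<Rightarrow> int \<Rightarrow> (nat \<Rightarrow> int)" where
  "pconst p c = (\<lambda>n. c mod p ^ n)"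

end

theory Submission
  imports Defs "HOL-Computational_Algebra.Primes"
begin

lemma sq_dvd_aux:
  fixes X p :: int and a :: nat
  assumes p: "prime p" and a: "a \<ge> 1" and d: "p ^ (2*a - 1) dvd X^2"
  shows "p ^ a dvd X"
  using a d
proof (induction a arbitrary: X rule: nat_induct_at_least)
  case base
  then have "p dvd X^2" by simp
  then show ?case using p by (simp add: prime_dvd_power_iff)
next
  case (Suc a)
  have "p dvd p ^ (2 * Suc a - 1)" using Suc.hyps by simp
  then have "p dvd X^2" using Suc.prems dvd_trans by blast
  then have "p dvd X" using p prime_dvd_power by blast
  then obtain X' where X: "X = p * X'" by (auto elim: dvdE)
  have e: "2 * Suc a - 1 = Suc (Suc (2*a - 1))" using Suc.hyps by simp
  have "p^2 * p ^ (2*a - 1) dvd p^2 * X'^2"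
    using Suc.prems unfolding X e by (simp add: power_mult_distrib power2_eq_square ac_simps)
  then have "p ^ (2*a - 1) dvd X'^2" using p
    by (simp add: dvd_mult_cancel_left)
  then have "p ^ a dvd X'" using Suc.IH by blast
  then show ?case unfolding X by simp
qed

theorem lemma5p6:
  fixes s w z :: "nat \<Rightarrow> int" and \<alpha> j :: nat
  assumes s_in: "s \<in> padic_ints 11"
    and s_sq: "pmul 11 s s = pconst 11 5"
    and s_7: "[s 1 = 7] (mod 11)"
    and w_in: "w \<in> padic_ints 11"
    and w_def: "pmul 11 s w = pconst 11 2"
    and alpha: "\<alpha> \<ge> 1"
    and j: "j \<in> {1..10}"
    and z_in: "z \<in> padic_ints 11"
    and z_cong: "[z (2*\<alpha>) = w (2*\<alpha>) + int j * 11 ^ (2*\<alpha> - 1)] (mod 11 ^ (2*\<alpha>))"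
  shows "\<not> (\<exists>y \<in> padic_ints 11.
            padd 11 (psub 11 (pmul 11 y y) (pmul 11 (pmul 11 s z) y)) (pconst 11 1) = pconst 11 0)"
proof
  assume "\<exists>y \<in> padic_ints 11.
            padd 11 (psub 11 (pmul 11 y y) (pmul 11 (pmul 11 s z) y)) (pconst 11 1) = pconst 11 0"
  then obtain y where yeq: "padd 11 (psub 11 (pmul 11 y y) (pmul 11 (pmul 11 s z) y)) (pconst 11 1) = pconst 11 0"
    by blast
  define N where "N = 2*\<alpha>"
  define k where "k = 2*\<alpha> - 1"
  define M :: int where "M = 11 ^ N"
  define S where "S = s N"
  define W where "W = w N"
  define Z where "Z = z N"
  define Y where "Y = y N"
  have Nk: "N = Suc k" using alpha unfolding N_def k_def by simp
  have h1: "M dvd Y*Y - S*Z*Y + 1"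
  proof -
    have "(((Y*Y) mod M - ((S*Z) mod M * Y) mod M) mod M + 1 mod M) mod M = 0 mod M"
      using fun_cong[OF yeq, of N]
      by (simp add: padd_def psub_def pmul_def pconst_def M_def S_def Z_def Y_def)
    then have "[Y*Y - S*Z*Y + 1 = 0] (mod M)" by (simp add: cong_def mod_simps)
    then show ?thesis by (simp add: cong_0_iff)
  qed
  have h2: "M dvd S*W - 2"
  proof -
    have "(S*W) mod M = 2 mod M" using fun_cong[OF w_def, of N]
      by (simp add: pmul_def pconst_def M_def S_def W_def)
    then show ?thesis by (simp add: mod_eq_dvd_iff)
  qed
  have h5: "M dvd S*S - 5"
  proof -
    have "(S*S) mod M = 5 mod M" using fun_cong[OF s_sq, of N]
      by (simp add: pmul_def pconst_def M_def S_def)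
    then show ?thesis by (simp add: mod_eq_dvd_iff)
  qed
  have h3: "M dvd Z - W - int j * 11^k"
    using z_cong unfolding cong_iff_dvd_diff M_def Z_def W_def N_def k_def by (simp add: algebra_simps)
  define X where "X = 2*Y - S*Z"
  define t where "t = (S*W - 2) + S*(Z - W - int j * 11^k)"
  define u where "u = S * int j * 11^k"
  have tM: "M dvd t" unfolding t_def using h2 h3 by simp
  have uM: "M dvd u*u"
  proof -
    have "(11::int)^N dvd 11^(k+k)" using alpha unfolding N_def k_def by (intro le_imp_power_dvd) simp
    then have "M dvd 11^k * 11^k" unfolding M_def by (simp add: power_add)
    then show ?thesis unfolding u_def by (metis dvd_mult mult.commute mult.left_commute)
  qed
  have SZ: "S*Z = 2 + t + u" unfolding t_def u_def by (simp add: algebra_simps)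
  have key: "X^2 - 4*u = 4*(Y*Y - S*Z*Y + 1) + (t*t + u*u + 4*t + 2*t*u)"
  proof -
    have "X^2 - 4*u = 4*(Y*Y - S*Z*Y + 1) + ((S*Z)^2 - 4 - 4*u)"
      unfolding X_def by (simp add: algebra_simps power2_eq_square)
    also have "(S*Z)^2 - 4 - 4*u = t*t + u*u + 4*t + 2*t*u"
      unfolding SZ by (simp add: algebra_simps power2_eq_square)
    finally show ?thesis .
  qed
  have hM: "M dvd X^2 - 4*u"
  proof -
    have "M dvd 4*(Y*Y - S*Z*Y + 1)" using h1 by (rule dvd_mult)
    moreover have "M dvd t*t" "M dvd 4*t" "M dvd 2*t*u" using tM by auto
    ultimately show ?thesis unfolding key using uM by (intro dvd_add) auto
  qed
  have kM: "(11::int)^k dvd M" unfolding M_def Nk by simp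
  have ku: "(11::int)^k dvd 4*u" unfolding u_def by simp
  have "(11::int)^k dvd X^2 - 4*u" using hM kM dvd_trans by blast
  then have "(11::int)^k dvd X^2" using ku
    by (metis diff_add_cancel dvd_add)
  then have "(11::int)^\<alpha> dvd X" using sq_dvd_aux[of 11 \<alpha> X] alpha
    unfolding k_def by simp
  then have "(11::int)^\<alpha> * 11^\<alpha> dvd X^2" by (simp add: power2_eq_square mult_dvd_mono)
  then have "M dvd X^2" unfolding M_def N_def by (metis mult_2 power_add)
  then have "M dvd X^2 - (X^2 - 4*u)" using hM by (rule dvd_diff)
  then have "M dvd 4*u" by simp
  then have "11^k * 11 dvd 11^k * (4 * S * int j)" unfolding M_def Nk u_def
    by (metis mult.commute mult.left_commute power_Suc)
  then have d11: "(11::int) dvd 4 * S * int j" by (simp add: dvd_mult_cancel_left)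
  have p11: "prime (11::int)" by simp
  have "\<not> (11::int) dvd int j"
  proof
    assume "(11::int) dvd int j"
    then have "11 dvd j" by presburger
    then show False using j by (auto dest: dvd_imp_le)
  qed
  moreover have "\<not> (11::int) dvd 4" by simp
  moreover have "\<not> (11::int) dvd S"
  proof
    assume "11 dvd S"
    then have "11 dvd S*S" by simp
    moreover have "(11::int) dvd M" unfolding M_def Nk by simp
    then have "11 dvd S*S - 5" using h5 dvd_trans by blast
    ultimately have "(11::int) dvd S*S - (S*S - 5)" by (rule dvd_diff)
    then have "(11::int) dvd 5" by simp
    then show False by simp
  qed
  ultimately show False using d11 p11 by (simp add: prime_dvd_mult_iff)
qed

end
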